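(* Let $a\in[0,\infty)$ and let $\theta:[0,1]\to[0,\infty]$ be a continuous and strictly decreasing function such that (1) $\theta(x)=\infty$ if and only if $x=0$, and (2) $\theta(x)=\frac{a}{2}$ if and only if $x=1$. Let $\vartheta:[0,\infty]\to[0,1]$ be given by $\vartheta(x)=(\theta+\frac{a}{2})^{(-1)}(x)$ for all $x\in[0,\infty]$. Then the function $O_{\theta,\vartheta}:[0,1]^2\to[0,1]$, $O_{\theta,\vartheta}(x,y)=\vartheta(\theta(x)+\theta(y))$, is a positive t-norm.
   Context: Arithmetic in $[0,\infty]$ uses $c+\infty=\infty$. The function $\theta+\frac{a}{2}:[0,1]\to[0,\infty]$ is $x\mapsto\theta(x)+\frac a2$. For a decreasing function $f:[0,1]\to[0,\infty]$, its pseudo-inverse $f^{(-1)}:[0,\infty]\to[0,1]$ is $f^{(-1)}(y)=\sup\{x\in[0,1]\mid f(x)>y\}$ (with $\sup\emptyset=0$). A t-norm is a commutative, associative map $T:[0,1]^2\to[0,1]$, increasing in each variable, with $T(x,1)=x$ for all $x$; it is positive if $T(x,y)=0$ implies $x=0$ or $y=0$. *)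

theory Defs
  imports "HOL-Analysis.Analysis" "HOL-Library.Extended_Nonnegative_Real"
begin

text \<open>[0,infinity] is modelled by ennreal; [0,1] by the reals in {0..1}.
  Functions on [0,1] are real-valued/ennreal-valued functions on real whose
  values outside {0..1} are irrelevant.\<close>

definition pseudo_inv :: "(real \<Rightarrow> ennreal) \<Rightarrow> ennreal \<Rightarrow> real" where
  "pseudo_inv f y =
     (if {x \<in> {0..1}. f x > y} = {} then 0 else Sup {x \<in> {0..1}. f x > y})"

definition is_tnorm :: "(real \<Rightarrow> real \<Rightarrow> real) \<Rightarrow> bool" where
  "is_tnorm T \<longleftrightarrow>
     (\<forall>x\<in>{0..1}. \<forall>y\<in>{0..1}. T x y \<in> {0..1}) \<and>
     (\<forall>x\<in>{0..1}. \<forall>y\<in>{0..1}. T x y = T y x) \<and>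
     (\<forall>x\<in>{0..1}. \<forall>y\<in>{0..1}. \<forall>z\<in>{0..1}. T (T x y) z = T x (T y z)) \<and>
     (\<forall>x\<in>{0..1}. \<forall>x'\<in>{0..1}. \<forall>y\<in>{0..1}. x \<le> x' \<longrightarrow> T x y \<le> T x' y) \<and>
     (\<forall>x\<in>{0..1}. \<forall>y\<in>{0..1}. \<forall>y'\<in>{0..1}. y \<le> y' \<longrightarrow> T x y \<le> T x y') \<and>
     (\<forall>x\<in>{0..1}. T x 1 = x)"

definition positive_tnorm :: "(real \<Rightarrow> real \<Rightarrow> real) \<Rightarrow> bool" where
  "positive_tnorm T \<longleftrightarrow> is_tnorm T \<and>
     (\<forall>x\<in>{0..1}. \<forall>y\<in>{0..1}. T x y = 0 \<longrightarrow> x = 0 \<or> y = 0)"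

end

theory Submission
  imports Defs
begin

lemma pseudo_inv_range: "pseudo_inv f s \<in> {0..1}"
proof (cases "{x \<in> {0..1}. f x > s} = {}")
  case True thus ?thesis by (simp add: pseudo_inv_def)
next
  case False
  then obtain x where x: "x \<in> {0..1}" "f x > s" by auto
  have bdd: "bdd_above {x \<in> {0..1::real}. f x > s}" by (rule bdd_aboveI[of _ 1]) auto
  have "x \<le> Sup {x \<in> {0..1}. f x > s}" using x bdd by (intro cSup_upper) auto
  moreover have "Sup {x \<in> {0..1}. f x > s} \<le> 1" using False by (intro cSup_least) auto
  ultimately show ?thesis using False x by (simp add: pseudo_inv_def)
qed

theorem proposition4p2:
  fixes a :: real and \<theta> :: "real \<Rightarrow> ennreal"
  assumes a_nonneg: "a \<ge> 0"
    and cont: "continuous_on {0..1} \<theta>"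
    and strict_dec: "\<forall>x\<in>{0..1}. \<forall>y\<in>{0..1}. x < y \<longrightarrow> \<theta> y < \<theta> x"
    and inf_iff: "\<forall>x\<in>{0..1}. \<theta> x = \<infinity> \<longleftrightarrow> x = 0"
    and half_iff: "\<forall>x\<in>{0..1}. \<theta> x = ennreal (a / 2) \<longleftrightarrow> x = 1"
  shows "positive_tnorm
           (\<lambda>x y. pseudo_inv (\<lambda>t. \<theta> t + ennreal (a / 2)) (\<theta> x + \<theta> y))"
proof -
  define c where "c = ennreal (a / 2)"
  define V where "V = pseudo_inv (\<lambda>t. \<theta> t + c)"
  have cfin: "c \<noteq> \<infinity>" by (simp add: c_def)
  have th0: "\<theta> 0 = \<infinity>" using inf_iff by auto
  have th1: "\<theta> 1 = c" using half_iff by (auto simp: c_def)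
  have inj: "u = v" if "u \<in> {0..1}" "v \<in> {0..1}" "\<theta> u = \<theta> v" for u v
  proof (rule ccontr)
    assume "u \<noteq> v" hence "u < v \<or> v < u" by auto
    thus False using strict_dec that by force
  qed
  have mono_le: "\<theta> v \<le> \<theta> u" if "u \<in> {0..1}" "v \<in> {0..1}" "u \<le> v" for u v
    by (cases "u = v") (use strict_dec that in \<open>auto intro: less_imp_le\<close>)
  have ge_c: "c \<le> \<theta> u" if "u \<in> {0..1}" for u
    using mono_le[of u 1] that th1 by auto
  have Vrange: "V s \<in> {0..1}" for s unfolding V_def by (rule pseudo_inv_range)
  have key: "\<theta> (V s) + c = s" if "c + c \<le> s" for s
  proof (cases "s = \<infinity>")
    case True
    hence "{x \<in> {0..1}. \<theta> x + c > s} = {}" by auto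
    hence "V s = 0" by (simp add: V_def pseudo_inv_def)
    thus ?thesis using th0 True by simp
  next
    case False
    define r where "r = s - c"
    have "c \<le> c + c" by simp
    hence "c \<le> s" using that by (rule order_trans)
    hence rc: "r + c = s" unfolding r_def by (rule diff_add_cancel_ennreal)
    have rfin: "r \<noteq> \<infinity>" using rc False by auto
    have "c + c \<le> c + r" using that rc by (simp add: add.commute)
    hence cr: "c \<le> r" using cfin by (simp add: ennreal_add_left_cancel_le)
    have conn: "connected (\<theta> ` {0..1})"
      by (rule connected_continuous_image[OF cont]) simp
    have i0: "\<theta> 0 \<in> \<theta> ` {0..1}" and i1: "\<theta> 1 \<in> \<theta> ` {0..1}" by auto
    have "r \<in> \<theta> ` {0..1}"
      apply (rule connectedD_interval[OF conn, of "\<theta> 1" "\<theta> 0"])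
      using i0 i1 th0 th1 cr rfin by auto
    then obtain x0 where x0: "x0 \<in> {0..1}" "\<theta> x0 = r" by auto
    have x0pos: "0 < x0" using x0 inf_iff rfin by force
    have "{x \<in> {0..1}. \<theta> x + c > s} = {0..<x0}"
    proof (rule set_eqI, rule iffI)
      fix x assume "x \<in> {x \<in> {0..1}. \<theta> x + c > s}"
      hence x: "x \<in> {0..1}" "\<theta> x + c > s" by auto
      have "\<theta> x > r" using x(2) rc cfin ennreal_add_left_cancel_less[of c r "\<theta> x"]
        by (simp add: add.commute)
      hence "x < x0" using mono_le[of x0 x] x x0 by (metis not_le leD)
      thus "x \<in> {0..<x0}" using x by auto
    next
      fix x assume "x \<in> {0..<x0}"
      hence x: "0 \<le> x" "x < x0" by auto
      have xi: "x \<in> {0..1}" using x x0 by auto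
      have "\<theta> x > r" using strict_dec x x0 xi by auto
      hence "\<theta> x + c > s" using rc cfin ennreal_add_left_cancel_less[of c r "\<theta> x"]
        by (simp add: add.commute)
      thus "x \<in> {x \<in> {0..1}. \<theta> x + c > s}" using xi by auto
    qed
    hence "V s = x0" using x0pos by (simp add: V_def pseudo_inv_def)
    thus ?thesis using x0 rc by simp
  qed
  have keyxy: "\<theta> (V (\<theta> x + \<theta> y)) + c = \<theta> x + \<theta> y" if "x \<in> {0..1}" "y \<in> {0..1}" for x y
    using key ge_c that by (simp add: add_mono)
  have ginj: "u = v" if "u \<in> {0..1}" "v \<in> {0..1}" "\<theta> u + c = \<theta> v + c" for u v
  proof -
    have "c + \<theta> u = c + \<theta> v" using that(3) by (simp add: add.commute)
    hence "\<theta> u = \<theta> v" using cfin by (simp add: ennreal_add_left_cancel)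
    thus ?thesis using inj that by blast
  qed
  have gle: "u \<le> v" if "u \<in> {0..1}" "v \<in> {0..1}" "\<theta> v + c \<le> \<theta> u + c" for u v
  proof (rule ccontr)
    assume "\<not> u \<le> v"
    hence "\<theta> u < \<theta> v" using strict_dec that by auto
    hence "\<theta> u + c < \<theta> v + c" using cfin ennreal_add_left_cancel_less[of c "\<theta> u" "\<theta> v"]
      by (simp add: add.commute)
    thus False using leD[OF that(3)] by blast
  qed
  define T where "T x y = V (\<theta> x + \<theta> y)" for x y
  have Tk: "\<theta> (T x y) + c = \<theta> x + \<theta> y" if "x \<in> {0..1}" "y \<in> {0..1}" for x y
    using keyxy[OF that] by (simp add: T_def)
  have Tr: "T x y \<in> {0..1}" for x y unfolding T_def by (rule Vrange)
  have comm: "T x y = T y x" for x y by (simp add: T_def add.commute)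
  have assoc: "T (T x y) z = T x (T y z)" if "x \<in> {0..1}" "y \<in> {0..1}" "z \<in> {0..1}" for x y z
  proof -
    have "c + (\<theta> (T x y) + \<theta> z) = (\<theta> (T x y) + c) + \<theta> z" by (simp add: ac_simps)
    also have "\<dots> = \<theta> x + \<theta> y + \<theta> z" using Tk[OF that(1,2)] by simp
    also have "\<dots> = \<theta> x + (\<theta> (T y z) + c)" using Tk[OF that(2,3)] by (simp add: ac_simps)
    also have "\<dots> = c + (\<theta> x + \<theta> (T y z))" by (simp add: ac_simps)
    finally have "\<theta> (T x y) + \<theta> z = \<theta> x + \<theta> (T y z)"
      using cfin by (simp add: ennreal_add_left_cancel)
    thus ?thesis by (simp add: T_def)
  qed
  have mono1: "T x y \<le> T x' y" if "x \<in> {0..1}" "x' \<in> {0..1}" "y \<in> {0..1}" "x \<le> x'" for x x' y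
  proof (rule gle[OF Tr Tr])
    show "\<theta> (T x' y) + c \<le> \<theta> (T x y) + c"
      using Tk that mono_le[of x x'] by (simp add: add_right_mono)
  qed
  have unit: "T x 1 = x" if "x \<in> {0..1}" for x
  proof -
    have "\<theta> (T x 1) + c = \<theta> x + c" using Tk[OF that, of 1] th1 by simp
    thus ?thesis using ginj[OF Tr that] by blast
  qed
  have pos: "x = 0 \<or> y = 0" if "x \<in> {0..1}" "y \<in> {0..1}" "T x y = 0" for x y
  proof -
    have "\<theta> x + \<theta> y = \<infinity>" using Tk[OF that(1,2)] that(3) th0 by simp
    hence "\<theta> x = \<infinity> \<or> \<theta> y = \<infinity>" by simp
    thus ?thesis using inf_iff that by auto
  qed
  have mono2: "T x y \<le> T x y'" if "x \<in> {0..1}" "y \<in> {0..1}" "y' \<in> {0..1}" "y \<le> y'" for x y y'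
    using mono1[OF that(2,3,1,4)] comm by simp
  have "positive_tnorm T"
    unfolding positive_tnorm_def is_tnorm_def
  proof (intro conjI)
    show "\<forall>x\<in>{0..1}. \<forall>y\<in>{0..1}. T x y \<in> {0..1}" using Tr by blast
    show "\<forall>x\<in>{0..1}. \<forall>y\<in>{0..1}. T x y = T y x" using comm by blast
    show "\<forall>x\<in>{0..1}. \<forall>y\<in>{0..1}. \<forall>z\<in>{0..1}. T (T x y) z = T x (T y z)" using assoc by blast
    show "\<forall>x\<in>{0..1}. \<forall>x'\<in>{0..1}. \<forall>y\<in>{0..1}. x \<le> x' \<longrightarrow> T x y \<le> T x' y" using mono1 by blast
    show "\<forall>x\<in>{0..1}. \<forall>y\<in>{0..1}. \<forall>y'\<in>{0..1}. y \<le> y' \<longrightarrow> T x y \<le> T x y'" using mono2 by blast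
    show "\<forall>x\<in>{0..1}. T x 1 = x" using unit by blast
    show "\<forall>x\<in>{0..1}. \<forall>y\<in>{0..1}. T x y = 0 \<longrightarrow> x = 0 \<or> y = 0" using pos by blast
  qed
  moreover have "T = (\<lambda>x y. pseudo_inv (\<lambda>t. \<theta> t + ennreal (a / 2)) (\<theta> x + \<theta> y))"
    by (intro ext) (simp add: T_def V_def c_def)
  ultimately show ?thesis by simp
qed

end
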